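(* Let $\mathcal{M}\subseteq\mathbb{S}^n$ be finite. If $\mathcal{T}(\mathcal{M}')$ is rank-one generated for every $\mathcal{M}'\subseteq\mathcal{M}$, then $\mathcal{S}(\mathcal{M})$ is rank-one generated.
   Context: $\mathbb{S}^n$ denotes real symmetric $n\times n$ matrices with $\langle A,B\rangle=\mathrm{tr}(AB)$, $\mathbb{S}^n_+$ the PSD cone. For $\mathcal{M}\subseteq\mathbb{S}^n$, $\mathcal{S}(\mathcal{M})=\{X\in\mathbb{S}^n_+:\langle M,X\rangle\ge0\ \forall M\in\mathcal{M}\}$ and $\mathcal{T}(\mathcal{M})=\{X\in\mathbb{S}^n_+:\langle M,X\rangle=0\ \forall M\in\mathcal{M}\}$ (so $\mathcal{T}(\emptyset)=\mathbb{S}^n_+$). A closed convex cone $\mathcal{S}\subseteq\mathbb{S}^n_+$ is rank-one generated (ROG) if $\mathcal{S}=\mathrm{conv}(\mathcal{S}\cap\{xx^\top:x\in\mathbb{R}^n\})$. *)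

theory Defs
  imports "HOL-Analysis.Analysis"
begin

definition sym_mat :: "real^'n^'n \<Rightarrow> bool" where
  "sym_mat A \<longleftrightarrow> transpose A = A"

definition trace_ip :: "real^'n^'n \<Rightarrow> real^'n^'n \<Rightarrow> real" where
  "trace_ip A B = (\<Sum>i\<in>UNIV. \<Sum>j\<in>UNIV. A $ i $ j * B $ j $ i)"

definition psd_cone :: "(real^'n^'n) set" where
  "psd_cone = {X. sym_mat X \<and> (\<forall>x. x \<bullet> (X *v x) \<ge> 0)}"

definition outer :: "real^'n \<Rightarrow> real^'n^'n" where
  "outer x = (\<chi> i j. x $ i * x $ j)"

definition rank_one_mats :: "(real^'n^'n) set" where
  "rank_one_mats = range outer"

definition S_set :: "(real^'n^'n) set \<Rightarrow> (real^'n^'n) set" where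
  "S_set M = {X \<in> psd_cone. \<forall>A\<in>M. trace_ip A X \<ge> 0}"

definition T_set :: "(real^'n^'n) set \<Rightarrow> (real^'n^'n) set" where
  "T_set M = {X \<in> psd_cone. \<forall>A\<in>M. trace_ip A X = 0}"

definition ROG :: "(real^'n^'n) set \<Rightarrow> bool" where
  "ROG S \<longleftrightarrow> closed S \<and> convex S \<and> cone S \<and> S \<subseteq> psd_cone \<and>
     S = convex hull (S \<inter> rank_one_mats)"

end

theory Submission
  imports Defs
begin

lemma trace_ip_add: "trace_ip A (X + Y) = trace_ip A X + trace_ip A Y"
  by (simp add: trace_ip_def distrib_left sum.distrib)

lemma trace_ip_scale: "trace_ip A (c *\<^sub>R X) = c * trace_ip A X"
  by (simp add: trace_ip_def sum_distrib_left mult.left_commute)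

lemma trace_ip_diff: "trace_ip A (X - Y) = trace_ip A X - trace_ip A Y"
  by (simp add: trace_ip_def right_diff_distrib sum_subtractf)

lemma linear_trace_ip: "linear (trace_ip A)"
  by (rule linearI) (simp_all add: trace_ip_add trace_ip_scale)

lemma cont_trace_ip: "continuous_on UNIV (trace_ip A)"
  by (rule linear_continuous_on) (metis linear_conv_bounded_linear linear_trace_ip)

lemma cc_sum:
  assumes "convex_cone K" "finite F" "F \<subseteq> K" "\<forall>v\<in>F. 0 \<le> u v"
  shows "(\<Sum>v\<in>F. u v *\<^sub>R v) \<in> K"
  using assms(2-4)
proof (induct F rule: finite_induct)
  case empty then show ?case using convex_cone_contains_0[OF assms(1)] by simp
next
  case (insert x F)
  then show ?case by (simp add: convex_cone_add[OF assms(1)] convex_cone_scaleR[OF assms(1)])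
qed

lemma rog_cc: "ROG S \<Longrightarrow> S \<noteq> {} \<Longrightarrow> convex_cone S"
  by (auto simp: ROG_def convex_cone_def conic_def cone_def)

lemma outer_scale: "0 \<le> c \<Longrightarrow> c *\<^sub>R outer x = outer (sqrt c *\<^sub>R x)"
proof -
  assume c: "0 \<le> c"
  have "\<And>a b. c * (a * b) = sqrt c * a * (sqrt c * b)"
    using c by (metis mult.assoc mult.left_commute real_sqrt_mult_self abs_of_nonneg)
  then show ?thesis by (simp add: outer_def vec_eq_iff)
qed

theorem lemma2p15:
  fixes M :: "(real^'n^'n) set"
  assumes "finite M"
    and "\<forall>A\<in>M. sym_mat A"
    and "\<forall>M'. M' \<subseteq> M \<longrightarrow> ROG (T_set M')"
  shows "ROG (S_set M)"
proof -
  have psd: "psd_cone = T_set ({} :: (real^'n^'n) set)" by (simp add: T_set_def)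
  have rogpsd: "ROG (psd_cone :: (real^'n^'n) set)" using assms(3) psd by auto
  have zT: "\<And>M'. (0::real^'n^'n) \<in> T_set M'"
    by (simp add: T_set_def psd_cone_def sym_mat_def trace_ip_def transpose_def vec_eq_iff)
  have zS: "(0::real^'n^'n) \<in> S_set M"
    by (simp add: S_set_def psd_cone_def sym_mat_def trace_ip_def transpose_def vec_eq_iff)
  have ccpsd: "convex_cone (psd_cone :: (real^'n^'n) set)"
    using rog_cc[OF rogpsd] zT psd by auto
  have ccT: "\<And>M'. M' \<subseteq> M \<Longrightarrow> convex_cone (T_set M')"
    using rog_cc assms(3) zT by blast
  have ccS: "convex_cone (S_set M)"
    unfolding convex_cone_iff using zS
    by (auto simp: S_set_def convex_cone_add[OF ccpsd] convex_cone_scaleR[OF ccpsd]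
        trace_ip_add trace_ip_scale)
  have closedS: "closed (S_set M)"
  proof -
    have "S_set M = psd_cone \<inter> (\<Inter>A\<in>M. {X. 0 \<le> trace_ip A X})" by (auto simp: S_set_def)
    moreover have "closed (psd_cone :: (real^'n^'n) set)" using rogpsd by (simp add: ROG_def)
    moreover have "\<And>A. closed {X. 0 \<le> trace_ip A (X::real^'n^'n)}"
      by (rule closed_Collect_le) (simp_all add: cont_trace_ip)
    ultimately show ?thesis by (metis closed_INT closed_Int)
  qed
  define R1 where "R1 = S_set M \<inter> rank_one_mats"
  define C where "C = convex hull R1"
  have R1cone: "cone R1"
    unfolding cone_def
  proof (intro ballI allI impI)
    fix X c assume X: "X \<in> R1" and c: "(0::real) \<le> c"
    then obtain x where x: "X = outer x" by (auto simp: R1_def rank_one_mats_def)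
    have "c *\<^sub>R X \<in> rank_one_mats" using outer_scale[OF c] x by (auto simp: rank_one_mats_def)
    moreover have "c *\<^sub>R X \<in> S_set M" using convex_cone_scaleR[OF ccS c] X by (auto simp: R1_def)
    ultimately show "c *\<^sub>R X \<in> R1" by (simp add: R1_def)
  qed
  have R1ne: "0 \<in> R1"
  proof -
    have "(0::real^'n^'n) = outer 0" by (simp add: outer_def vec_eq_iff)
    thus ?thesis using zS by (auto simp: R1_def rank_one_mats_def)
  qed
  have ccC: "convex_cone C"
    unfolding convex_cone_def C_def
    using cone_convex_hull[OF R1cone] R1ne hull_subset[of R1 convex]
    by (auto simp: cone_def conic_def)
  have CS: "C \<subseteq> S_set M" unfolding C_def R1_def
    by (rule hull_minimal) (use ccS in \<open>auto simp: convex_cone_def\<close>)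
  have convC: "convex C" using ccC by (simp add: convex_cone_def)
  define act where "act X = {A\<in>M. trace_ip A X = 0}" for X
  have main: "\<forall>X\<in>S_set M. card (M - act X) = k \<longrightarrow> X \<in> C" for k
  proof (induct k rule: less_induct)
    case (less k)
    show ?case
    proof (intro ballI impI)
      fix X assume XS: "X \<in> S_set M" and ck: "card (M - act X) = k"
      define M' where "M' = act X"
      have M'M: "M' \<subseteq> M" by (auto simp: M'_def act_def)
      have XT: "X \<in> T_set M'" using XS by (auto simp: M'_def act_def T_set_def S_set_def)
      have IH: "Y \<in> C" if "Y \<in> S_set M" "M' \<subset> act Y" for Y
      proof -
        have "act Y \<subseteq> M" by (auto simp: act_def)
        hence "M - act Y \<subset> M - M'" using \<open>M' \<subset> act Y\<close> M'M by blast
        hence "card (M - act Y) < k" using ck assms(1) M'_def by (metis psubset_card_mono finite_Diff)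
        thus "Y \<in> C" using less \<open>Y \<in> S_set M\<close> by blast
      qed
      have inner: "\<forall>u Z. (\<forall>v\<in>F. 0 \<le> u v) \<longrightarrow> Z = (\<Sum>v\<in>F. u v *\<^sub>R v) \<longrightarrow> Z \<in> S_set M \<longrightarrow> Z \<in> C"
        if "finite F" "F \<subseteq> T_set M' \<inter> rank_one_mats" for F
        using that
      proof (induct F rule: finite_induct)
        case empty
        then show ?case using convex_cone_contains_0[OF ccC] by simp
      next
        case (insert R F0)
        show ?case
        proof (intro allI impI)
          fix u Z assume u: "\<forall>v\<in>insert R F0. 0 \<le> u v"
            and Zeq: "Z = (\<Sum>v\<in>insert R F0. u v *\<^sub>R v)" and ZS: "Z \<in> S_set M"
          have RT: "R \<in> T_set M'" "R \<in> rank_one_mats" using insert by auto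
          have Zeq2: "Z = u R *\<^sub>R R + (\<Sum>v\<in>F0. u v *\<^sub>R v)" using Zeq insert by simp
          have IH0: "\<And>w Z. \<forall>v\<in>F0. 0 \<le> w v \<Longrightarrow> Z = (\<Sum>v\<in>F0. w v *\<^sub>R v) \<Longrightarrow> Z \<in> S_set M \<Longrightarrow> Z \<in> C"
            using insert by blast
          have ZT: "Z \<in> T_set M'" using cc_sum[OF ccT[OF M'M] _ _ u] insert Zeq by auto
          have Rz: "\<And>A. A \<in> M' \<Longrightarrow> trace_ip A R = 0" using RT by (auto simp: T_set_def)
          show "Z \<in> C"
          proof (cases "act Z = M'")
            case False
            have "M' \<subseteq> act Z" using ZT M'M by (auto simp: act_def T_set_def)
            thus ?thesis using IH ZS False by blast
          next
            case True
            have pos: "\<And>A. A \<in> M \<Longrightarrow> A \<notin> M' \<Longrightarrow> 0 < trace_ip A Z"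
              using True ZS by (force simp: act_def S_set_def)
            show ?thesis
            proof (cases "u R = 0")
              case True
              then show ?thesis using IH0[of u Z] Zeq2 u ZS by auto
            next
              case False
              hence a: "0 < u R" using u by force
              define Bp where "Bp = {A\<in>M. 0 < trace_ip A R}"
              define s where "s = Min (insert (u R) ((\<lambda>A. trace_ip A Z / trace_ip A R) ` Bp))"
              have finBp: "finite Bp" using assms(1) Bp_def by auto
              have s_le_a: "s \<le> u R" by (simp add: s_def finBp)
              have s_le: "\<And>A. A \<in> Bp \<Longrightarrow> s \<le> trace_ip A Z / trace_ip A R" by (simp add: s_def finBp)
              have s_pos: "0 < s"
                unfolding s_def
              proof (subst Min_gr_iff)
                show "\<forall>a\<in>insert (u R) ((\<lambda>A. trace_ip A Z / trace_ip A R) ` Bp). 0 < a"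
                proof
                  fix a assume "a \<in> insert (u R) ((\<lambda>A. trace_ip A Z / trace_ip A R) ` Bp)"
                  then consider "a = u R" | A where "A \<in> Bp" "a = trace_ip A Z / trace_ip A R" by auto
                  then show "0 < a"
                  proof cases
                    case 1 then show ?thesis using a by simp
                  next
                    case 2
                    then have "A \<in> M" "0 < trace_ip A R" by (auto simp: Bp_def)
                    moreover then have "A \<notin> M'" using Rz by force
                    ultimately show ?thesis using pos 2 by simp
                  qed
                qed
              qed (auto simp: finBp)
              define u' where "u' = u(R := u R - s)"
              define Z' where "Z' = Z - s *\<^sub>R R"
              have sumF0: "(\<Sum>v\<in>F0. u' v *\<^sub>R v) = (\<Sum>v\<in>F0. u v *\<^sub>R v)"
                using insert(2) by (intro sum.cong) (auto simp: u'_def)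
              have Z'eq: "Z' = (\<Sum>v\<in>insert R F0. u' v *\<^sub>R v)"
                using insert(1,2) sumF0 Zeq2 by (simp add: Z'_def u'_def scaleR_diff_left)
              have u': "\<forall>v\<in>insert R F0. 0 \<le> u' v" using u s_le_a by (auto simp: u'_def)
              have Z'T: "Z' \<in> T_set M'" using cc_sum[OF ccT[OF M'M] _ _ u'] insert Z'eq by auto
              have trZ': "trace_ip A Z' = trace_ip A Z - s * trace_ip A R" for A
                by (simp add: Z'_def trace_ip_diff trace_ip_scale)
              have Z'S: "Z' \<in> S_set M"
                unfolding S_set_def
              proof (intro CollectI conjI ballI)
                show "Z' \<in> psd_cone" using Z'T by (simp add: T_set_def)
              next
                fix A assume A: "A \<in> M"
                have tz: "0 \<le> trace_ip A Z" using ZS A by (simp add: S_set_def)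
                show "0 \<le> trace_ip A Z'"
                proof (cases "0 < trace_ip A R")
                  case True
                  then have "A \<in> Bp" using A by (simp add: Bp_def)
                  then have "s \<le> trace_ip A Z / trace_ip A R" by (rule s_le)
                  then have "s * trace_ip A R \<le> trace_ip A Z" using True by (simp add: pos_le_divide_eq)
                  then show ?thesis by (simp add: trZ')
                next
                  case False
                  then have "0 \<le> - (s * trace_ip A R)" using s_pos
                    by (simp add: mult_nonneg_nonpos)
                  then show ?thesis using tz by (simp add: trZ')
                qed
              qed
              have Z'C: "Z' \<in> C"
              proof (cases "s = u R")
                case True
                then have "Z' = (\<Sum>v\<in>F0. u v *\<^sub>R v)" using Zeq2 by (simp add: Z'_def)
                then show ?thesis using IH0[of u Z'] u Z'S by auto
              next
                case False
                have "s \<in> insert (u R) ((\<lambda>A. trace_ip A Z / trace_ip A R) ` Bp)"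
                  unfolding s_def by (rule Min_in) (auto simp: finBp)
                then obtain A where A: "A \<in> Bp" "s = trace_ip A Z / trace_ip A R" using False by auto
                then have "trace_ip A Z' = 0" by (simp add: trZ' Bp_def)
                moreover have "A \<in> M" "A \<notin> M'" using A Rz by (force simp: Bp_def)+
                moreover have "M' \<subseteq> act Z'" using Z'T M'M by (auto simp: act_def T_set_def)
                ultimately have "M' \<subset> act Z'" by (auto simp: act_def)
                then show ?thesis using IH Z'S by blast
              qed
              define Bn where "Bn = {A\<in>M. trace_ip A R < 0}"
              have finBn: "finite Bn" using assms(1) Bn_def by auto
              show ?thesis
              proof (cases "Bn = {}")
                case True
                then have "R \<in> S_set M" using RT
                  by (force simp: S_set_def T_set_def Bn_def not_less)
                then have "R \<in> C" using RT(2) unfolding C_def R1_def by (simp add: hull_inc)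
                have "Z = Z' + s *\<^sub>R R" by (simp add: Z'_def)
                thus ?thesis using convex_cone_add[OF ccC Z'C convex_cone_scaleR[OF ccC _ \<open>R \<in> C\<close>]] s_pos
                  by simp
              next
                case False
                define t where "t = Min ((\<lambda>A. trace_ip A Z / (- trace_ip A R)) ` Bn)"
                have t_le: "\<And>A. A \<in> Bn \<Longrightarrow> t \<le> trace_ip A Z / (- trace_ip A R)"
                  by (simp add: t_def finBn)
                have t_pos: "0 < t"
                  unfolding t_def
                proof (subst Min_gr_iff)
                  show "\<forall>a\<in>(\<lambda>A. trace_ip A Z / (- trace_ip A R)) ` Bn. 0 < a"
                  proof
                    fix a assume "a \<in> (\<lambda>A. trace_ip A Z / (- trace_ip A R)) ` Bn"
                    then obtain A where A: "A \<in> Bn" "a = trace_ip A Z / (- trace_ip A R)" by auto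
                    then have "A \<in> M" "trace_ip A R < 0" by (auto simp: Bn_def)
                    moreover then have "A \<notin> M'" using Rz by force
                    ultimately show "0 < a" using pos[of A] A by (simp add: divide_pos_neg)
                  qed
                qed (use False finBn in auto)
                have "t \<in> (\<lambda>A. trace_ip A Z / (- trace_ip A R)) ` Bn"
                  unfolding t_def by (rule Min_in) (use False finBn in auto)
                then obtain A0 where A0: "A0 \<in> Bn" "t = trace_ip A0 Z / (- trace_ip A0 R)" by auto
                define Y where "Y = Z + t *\<^sub>R R"
                have trY: "trace_ip A Y = trace_ip A Z + t * trace_ip A R" for A
                  by (simp add: Y_def trace_ip_add trace_ip_scale)
                have YT: "Y \<in> T_set M'" unfolding Y_def
                  using convex_cone_add[OF ccT[OF M'M] ZT convex_cone_scaleR[OF ccT[OF M'M] _ RT(1)]] t_pos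
                  by simp
                have YS: "Y \<in> S_set M"
                  unfolding S_set_def
                proof (intro CollectI conjI ballI)
                  show "Y \<in> psd_cone" using YT by (simp add: T_set_def)
                next
                  fix A assume A: "A \<in> M"
                  have tz: "0 \<le> trace_ip A Z" using ZS A by (simp add: S_set_def)
                  show "0 \<le> trace_ip A Y"
                  proof (cases "trace_ip A R < 0")
                    case True
                    then have "A \<in> Bn" using A by (simp add: Bn_def)
                    then have "t \<le> trace_ip A Z / (- trace_ip A R)" by (rule t_le)
                    moreover have rr: "0 < - trace_ip A R" using True by simp
                    ultimately have "t * (- trace_ip A R) \<le> trace_ip A Z"
                      using pos_le_divide_eq[OF rr, of t "trace_ip A Z"] by blast
                    then show ?thesis by (simp add: trY)
                  next
                    case False
                    then show ?thesis using tz t_pos by (simp add: trY)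
                  qed
                qed
                have "trace_ip A0 Y = 0" using A0 by (simp add: trY Bn_def)
                moreover have "A0 \<in> M" "A0 \<notin> M'" using A0 Rz by (force simp: Bn_def)+
                moreover have "M' \<subseteq> act Y" using YT M'M by (auto simp: act_def T_set_def)
                ultimately have "M' \<subset> act Y" by (auto simp: act_def)
                then have YC: "Y \<in> C" using IH YS by blast
                have st: "0 < s + t" using s_pos t_pos by simp
                have "(s + t) *\<^sub>R Z = t *\<^sub>R Z' + s *\<^sub>R Y"
                  by (simp add: Z'_def Y_def algebra_simps)
                then have "Z = (t / (s + t)) *\<^sub>R Z' + (s / (s + t)) *\<^sub>R Y"
                proof -
                  have "Z = inverse (s + t) *\<^sub>R ((s + t) *\<^sub>R Z)" using st by simp
                  also have "\<dots> = inverse (s + t) *\<^sub>R (t *\<^sub>R Z' + s *\<^sub>R Y)"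
                    using \<open>(s + t) *\<^sub>R Z = t *\<^sub>R Z' + s *\<^sub>R Y\<close> by simp
                  also have "\<dots> = (t / (s + t)) *\<^sub>R Z' + (s / (s + t)) *\<^sub>R Y"
                    by (simp add: scaleR_add_right divide_inverse mult.commute)
                  finally show ?thesis .
                qed
                moreover have "t / (s + t) + s / (s + t) = 1" using st by (simp add: add_divide_distrib[symmetric] add.commute)
                ultimately show ?thesis
                  using convexD[OF convC Z'C YC] s_pos t_pos by simp
              qed
            qed
          qed
        qed
      qed
      have "X \<in> convex hull (T_set M' \<inter> rank_one_mats)"
        using XT assms(3) M'M by (simp add: ROG_def)
      then obtain F u where F: "finite F" "F \<subseteq> T_set M' \<inter> rank_one_mats" "\<forall>v\<in>F. 0 \<le> u v"
        "(\<Sum>v\<in>F. u v *\<^sub>R v) = X"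
        unfolding convex_hull_explicit by blast
      show "X \<in> C" using inner[OF F(1,2)] F(3,4) XS by auto
    qed
  qed
  have SC: "S_set M \<subseteq> C" using main by blast
  show ?thesis
    unfolding ROG_def
    using closedS ccS CS SC
    by (auto simp: convex_cone_def conic_def cone_def C_def R1_def S_set_def)
qed

end
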